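(* Let $q$ be a prime power, $n\geq 2$, and let $C_1=[n,k_1,d_1]_q$ and $C_2=[n,k_2,d_2]_q$ be linear codes over $\mathbb{F}_q$ with $C_2\subset C_1$ (so that the CSS construction gives an $[[n,k,d_z/d_x]]_q$ stabilizer code with $k=k_1-k_2$, $d_z\geq d_1$, $d_x\geq d_2^{\perp}$), where $d_2^{\perp}$ is the minimum distance of the Euclidean dual $C_2^{\perp}$. Suppose that $d_1\geq 2$, $d_2^{\perp}\geq 2$, and that $C_2^{\perp}$ contains at least one nonzero codeword whose $i$th coordinate is zero. Then: (i) if $C_1$ has a minimum weight codeword with nonzero $i$th coordinate, there exists an AQECC $[[n-1,k,d_z^{P_i}/d_x^{P_i}]]_q$ with $k=k_1-k_2$, $d_z^{P_i}\geq d_1-1$ and $d_x^{P_i}\geq d_2^{\perp}$; (ii) if $C_1$ has no minimum weight codeword with nonzero $i$th coordinate, there exists an AQECC $[[n-1,k,d_z^{P_i}/d_x^{P_i}]]_q$ with $k=k_1-k_2$, $d_z^{P_i}\geq d_1$ and $d_x^{P_i}\geq d_2^{\perp}\geq 2$.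
   Context: An AQECC $[[n,k,d_z/d_x]]_q$ is a $q^k$-dimensional subspace of $\mathbb{C}^{q^n}$ correcting all qudit-flip errors up to $\lfloor (d_x-1)/2\rfloor$ and all phase-shift errors up to $\lfloor (d_z-1)/2\rfloor$. CSS construction: if $C_2\subset C_1\subseteq\mathbb{F}_q^n$ are linear of dimensions $k_2<k_1$, there is an AQECC $[[n,k_1-k_2,d_z/d_x]]_q$ with $d_z=\mathrm{wt}(C_1\setminus C_2)$ and $d_x=\mathrm{wt}(C_2^{\perp}\setminus C_1^{\perp})$. *)

theory Defs
  imports Complex_Main "HOL-Computational_Algebra.Primes"
begin

text \<open>Words of length n: functions nat => F_q vanishing at coordinates >= n.\<close>
definition words :: "nat \<Rightarrow> (nat \<Rightarrow> 'a::zero) set" where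
  "words n = {x. \<forall>j\<ge>n. x j = 0}"

definition wt :: "nat \<Rightarrow> (nat \<Rightarrow> 'a::zero) \<Rightarrow> nat" where
  "wt n x = card {j. j < n \<and> x j \<noteq> 0}"

definition linear_code :: "nat \<Rightarrow> (nat \<Rightarrow> 'a::field) set \<Rightarrow> bool" where
  "linear_code n C \<longleftrightarrow> C \<subseteq> words n \<and> (\<lambda>_. 0) \<in> C \<and>
     (\<forall>x\<in>C. \<forall>y\<in>C. (\<lambda>j. x j + y j) \<in> C) \<and>
     (\<forall>c. \<forall>x\<in>C. (\<lambda>j. c * x j) \<in> C)"

text \<open>A linear code of dimension k over F_q has exactly q^k codewords.\<close>
definition code_dim :: "(nat \<Rightarrow> 'a::finite_field) set \<Rightarrow> nat \<Rightarrow> bool" where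
  "code_dim C k \<longleftrightarrow> card C = card (UNIV :: 'a set) ^ k"

definition min_dist :: "nat \<Rightarrow> (nat \<Rightarrow> 'a::zero) set \<Rightarrow> nat" where
  "min_dist n C = Min {wt n c | c. c \<in> C \<and> c \<noteq> (\<lambda>_. 0)}"

definition dual :: "nat \<Rightarrow> (nat \<Rightarrow> 'a::field) set \<Rightarrow> (nat \<Rightarrow> 'a) set" where
  "dual n C = {x \<in> words n. \<forall>c\<in>C. (\<Sum>j<n. x j * c j) = 0}"

definition field_degree :: "'a::finite_field itself \<Rightarrow> nat" where
  "field_degree _ = (THE m. card (UNIV :: 'a set) = CHAR('a) ^ m)"

definition field_trace :: "'a::finite_field \<Rightarrow> 'a" where
  "field_trace y = (\<Sum>j<field_degree TYPE('a). y ^ (CHAR('a) ^ j))"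

text \<open>The absolute trace lands in the prime field F_p = {of_nat k | k < p}.\<close>
definition trace_nat :: "'a::finite_field \<Rightarrow> nat" where
  "trace_nat y = (THE k. k < CHAR('a) \<and> of_nat k = field_trace y)"

definition chi :: "'a::finite_field \<Rightarrow> complex" where
  "chi y = exp (2 * pi * \<i> * of_nat (trace_nat y) / of_nat CHAR('a))"

section \<open>Operators on C^(q^n), with basis indexed by words n\<close>

type_synonym 'a op = "(nat \<Rightarrow> 'a) \<Rightarrow> (nat \<Rightarrow> 'a) \<Rightarrow> complex"

definition op_mult :: "nat \<Rightarrow> 'a::finite_field op \<Rightarrow> 'a op \<Rightarrow> 'a op" where
  "op_mult n A B = (\<lambda>x y. \<Sum>z\<in>words n. A x z * B z y)"

definition op_adj :: "'a op \<Rightarrow> 'a op" where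
  "op_adj A = (\<lambda>x y. cnj (A y x))"

text \<open>Qudit-flip X(a): |y> -> |y + a>; phase-shift Z(b): |y> -> chi(b.y) |y>.\<close>
definition Xop :: "nat \<Rightarrow> (nat \<Rightarrow> 'a::finite_field) \<Rightarrow> 'a op" where
  "Xop n a = (\<lambda>x y. if x = (\<lambda>j. y j + a j) then 1 else 0)"

definition Zop :: "nat \<Rightarrow> (nat \<Rightarrow> 'a::finite_field) \<Rightarrow> 'a op" where
  "Zop n b = (\<lambda>x y. if x = y then chi (\<Sum>j<n. b j * y j) else 0)"

definition errors :: "nat \<Rightarrow> nat \<Rightarrow> nat \<Rightarrow> 'a::finite_field op set" where
  "errors n tx tz = {op_mult n (Xop n a) (Zop n b) | a b.
      a \<in> words n \<and> b \<in> words n \<and> wt n a \<le> tx \<and> wt n b \<le> tz}"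

text \<open>Orthogonal projector onto a q^k-dimensional subspace of C^(q^n).\<close>
definition is_code_projector :: "nat \<Rightarrow> nat \<Rightarrow> 'a::finite_field op \<Rightarrow> bool" where
  "is_code_projector n k P \<longleftrightarrow>
     (\<forall>x y. (x \<notin> words n \<or> y \<notin> words n) \<longrightarrow> P x y = 0) \<and>
     op_mult n P P = P \<and> op_adj P = P \<and>
     (\<Sum>x\<in>words n. P x x) = of_nat (card (UNIV :: 'a set) ^ k)"

text \<open>Knill--Laflamme error-correction condition for a set of errors.\<close>
definition corrects :: "nat \<Rightarrow> 'a::finite_field op \<Rightarrow> 'a op set \<Rightarrow> bool" where
  "corrects n P E \<longleftrightarrow> (\<forall>E1\<in>E. \<forall>E2\<in>E. \<exists>c::complex.
      op_mult n P (op_mult n (op_mult n (op_adj E1) E2) P) = (\<lambda>x y. c * P x y))"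

definition is_AQECC :: "'a::finite_field itself \<Rightarrow> nat \<Rightarrow> nat \<Rightarrow> nat \<Rightarrow> nat \<Rightarrow> 'a op \<Rightarrow> bool" where
  "is_AQECC _ n k dz dx P \<longleftrightarrow> is_code_projector n k P \<and>
     corrects n P (errors n ((dx - 1) div 2) ((dz - 1) div 2))"

end

theory Submission
  imports Defs "HOL-Number_Theory.Number_Theory" "HOL-Computational_Algebra.Polynomial"
begin

definition addsg :: "'a::finite_field set \<Rightarrow> bool" where
  "addsg T \<longleftrightarrow> 0 \<in> T \<and> (\<forall>a\<in>T. \<forall>b\<in>T. a + b \<in> T)"

lemma addsg_ofnat: "addsg T \<Longrightarrow> t \<in> T \<Longrightarrow> of_nat k * t \<in> T"
  by (induction k) (auto simp: addsg_def distrib_right)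

lemma addsg_neg: fixes T :: "'a::finite_field set" assumes "addsg T" "t \<in> T" shows "- t \<in> T"
proof -
  have h1: "1 \<le> CHAR('a)" using CHAR_pos[where 'a='a] by linarith
  have "of_nat (CHAR('a) - 1) = of_nat CHAR('a) - (1::'a)" using of_nat_diff[OF h1, where 'a='a] by simp
  moreover have "of_nat CHAR('a) = (0::'a)" by (rule of_nat_CHAR)
  ultimately have "of_nat (CHAR('a) - 1) = (-1::'a)" by simp
  hence "- t = of_nat (CHAR('a) - 1) * t" by simp
  thus ?thesis using addsg_ofnat[OF assms] by simp
qed

lemma addsg_step:
  fixes T :: "'a::finite_field set"
  assumes T: "addsg T" and x: "x \<notin> T"
  defines "T' \<equiv> (\<lambda>(t,k). t + of_nat k * x) ` (T \<times> {..<CHAR('a)})"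
  shows "addsg T'" "card T' = CHAR('a) * card T"
proof -
  let ?p = "CHAR('a)"
  show "addsg T'"
    unfolding addsg_def
  proof safe
    have "(0::'a) = (\<lambda>(t,k). t + of_nat k * x) (0,0)" by simp
    moreover have "(0,0) \<in> T \<times> {..<CHAR('a)}" using T CHAR_pos[where 'a='a] by (auto simp: addsg_def)
    ultimately show "0 \<in> T'" unfolding T'_def by blast
  next
    fix a b assume "a \<in> T'" "b \<in> T'"
    then obtain t k s l where a: "a = t + of_nat k * x" "t \<in> T" "k < ?p"
      and b: "b = s + of_nat l * x" "s \<in> T" "l < ?p" unfolding T'_def by auto
    have "of_nat (k + l) = (of_nat ((k+l) mod ?p) :: 'a)"
      by (subst of_nat_eq_iff_cong_CHAR) (simp add: cong_def)
    moreover have "a + b = (t + s) + of_nat (k+l) * x"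
      by (simp add: a b algebra_simps)
    ultimately have "a + b = (t + s) + of_nat ((k+l) mod ?p) * x" by simp
    moreover have "t + s \<in> T" using T a b by (auto simp: addsg_def)
    moreover have "(t+s, (k+l) mod ?p) \<in> T \<times> {..<?p}" using \<open>t + s \<in> T\<close> CHAR_pos[where 'a='a] by simp
    ultimately show "a + b \<in> T'" unfolding T'_def
      by (metis (no_types, lifting) case_prod_conv rev_image_eqI)
  qed
  have inj: "inj_on (\<lambda>(t,k). t + of_nat k * x) (T \<times> {..<?p})"
  proof -
    have *: False if "t \<in> T" "s \<in> T" "l < k" "k < ?p" "t + of_nat k * x = s + of_nat l * x"
      for t s k l
    proof -
      define d where "d = k - l"
      have "of_nat k = (of_nat d + of_nat l :: 'a)" using that by (simp add: d_def flip: of_nat_add)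
      hence "of_nat d * x = s + (- t)" using that(5) by (simp add: algebra_simps)
      moreover have "s + (-t) \<in> T" using T that addsg_neg[OF T, of t] by (auto simp: addsg_def)
      ultimately have dT: "of_nat d * x \<in> T" by simp
      have "coprime d ?p"
        using that d_def prime_imp_coprime[OF CHAR_prime[where 'a='a], of d]
        by (metis coprime_commute dvd_imp_le le_less_trans not_less zero_less_diff diff_le_self)
      then obtain u where u: "[d * u = Suc 0] (mod ?p)" using cong_solve_coprime_nat by blast
      hence "(of_nat (d*u) :: 'a) = of_nat (Suc 0)" by (simp only: of_nat_eq_iff_cong_CHAR)
      hence hx: "x = of_nat u * (of_nat d * x)" by (simp add: algebra_simps)
      show False using addsg_ofnat[OF T dT, of u] x hx by metis
    qed
    show ?thesis
      unfolding inj_on_def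
    proof (clarsimp)
      fix t k s l assume "t \<in> T" "k < ?p" "s \<in> T" "l < ?p" "t + of_nat k * x = s + of_nat l * x"
      moreover have "k = l"
        using *[of t s l k] *[of s t k l] calculation by (metis linorder_neqE_nat)
      ultimately show "t = s \<and> k = l" by simp
    qed
  qed
  have "card T' = card (T \<times> {..<?p})" unfolding T'_def by (rule card_image[OF inj])
  thus "card T' = ?p * card T" by (simp add: card_cartesian_product)
qed

lemma card_prime_power: "\<exists>m. card (UNIV :: 'a::finite_field set) = CHAR('a) ^ m"
proof -
  have "\<And>T j. addsg (T::'a set) \<Longrightarrow> card T = CHAR('a) ^ j \<Longrightarrow> \<exists>m. card (UNIV :: 'a set) = CHAR('a) ^ m"
  proof -
    fix T :: "'a set" and j
    show "addsg T \<Longrightarrow> card T = CHAR('a) ^ j \<Longrightarrow> \<exists>m. card (UNIV :: 'a set) = CHAR('a) ^ m"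
    proof (induction "card (UNIV :: 'a set) - card T" arbitrary: T j rule: less_induct)
      case less
      show ?case
      proof (cases "T = UNIV")
        case True thus ?thesis using less by auto
      next
        case False
        then obtain x where x: "x \<notin> T" by auto
        define T' where "T' = (\<lambda>(t,k). t + of_nat k * x) ` (T \<times> {..<CHAR('a)})"
        have s: "addsg T'" "card T' = CHAR('a) * card T"
          using addsg_step[OF less(2) x] unfolding T'_def by auto
        have "card T < card T'"
          using s less(3) prime_gt_1_nat[OF CHAR_prime[where 'a='a]] by simp
        moreover have "card T' \<le> card (UNIV :: 'a set)" by (rule card_mono) auto
        ultimately have "card (UNIV :: 'a set) - card T' < card (UNIV :: 'a set) - card T" by linarith
        from less(1)[OF this s(1)] s(2) less(3) show ?thesis by (metis power_Suc)
      qed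
    qed
  qed
  moreover have "addsg {0::'a}" by (simp add: addsg_def)
  moreover have "card {0::'a} = CHAR('a) ^ 0" by simp
  ultimately show ?thesis by blast
qed

lemma field_degree_eq: "card (UNIV::'a::finite_field set) = CHAR('a) ^ field_degree TYPE('a)"
proof -
  obtain m where m: "card (UNIV::'a set) = CHAR('a) ^ m" using card_prime_power by blast
  have p1: "1 < CHAR('a)" using prime_gt_1_nat[OF CHAR_prime[where 'a='a]] .
  have "\<exists>!m. card (UNIV :: 'a set) = CHAR('a) ^ m"
    using m p1 power_inject_exp by (metis)
  thus ?thesis unfolding field_degree_def by (rule theI')
qed

lemma field_degree_pos: "field_degree TYPE('a::finite_field) > 0"
proof (rule ccontr)
  assume "\<not> ?thesis"
  hence "card (UNIV::'a set) = 1" using field_degree_eq[where 'a='a] by simp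
  moreover have "card {0::'a, 1} \<le> card (UNIV::'a set)" by (rule card_mono) auto
  ultimately show False by simp
qed

lemma trace_add: "field_trace (x + y) = field_trace x + field_trace (y::'a::finite_field)"
  unfolding field_trace_def
  by (simp add: freshmans_dream'[OF CHAR_prime[where 'a='a] refl] sum.distrib)

lemma pow_card_same: "(y::'a::finite_field) ^ (CHAR('a) ^ field_degree TYPE('a)) = y"
  using finite_field_power_card_eq_same[of y] field_degree_eq[where 'a='a] by simp

lemma trace_pow: "field_trace (y::'a::finite_field) ^ CHAR('a) = field_trace y"
proof -
  let ?p = "CHAR('a)" and ?m = "field_degree TYPE('a)"
  define f where "f j = y ^ (?p ^ j)" for j
  have "field_trace y ^ ?p = (\<Sum>j<?m. (y ^ (?p ^ j)) ^ ?p)"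
    unfolding field_trace_def by (rule freshmans_dream_sum[OF CHAR_prime refl])
  also have "\<dots> = (\<Sum>j<?m. f (Suc j))"
    by (simp add: f_def power_mult[symmetric] mult.commute)
  also have "\<dots> = (\<Sum>j<Suc ?m. f j) - f 0" by (subst sum.lessThan_Suc_shift) simp
  also have "\<dots> = (\<Sum>j<?m. f j) + f ?m - f 0" by (simp only: sum.lessThan_Suc)
  also have "f ?m = f 0" using pow_card_same[of y] by (simp add: f_def)
  finally show ?thesis by (simp add: field_trace_def f_def)
qed

lemma ofnat_inj_CHAR: "a < CHAR('a) \<Longrightarrow> b < CHAR('a) \<Longrightarrow> (of_nat a :: 'a::finite_field) = of_nat b \<Longrightarrow> a = b"
  by (simp add: of_nat_eq_iff_cong_CHAR cong_def)

lemma ofnat_pow_CHAR: "(of_nat k :: 'a::finite_field) ^ CHAR('a) = of_nat k"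
proof (induction k)
  case 0 thus ?case using CHAR_pos[where 'a='a] by simp
next
  case (Suc k)
  have "(of_nat (Suc k) :: 'a) ^ CHAR('a) = (of_nat k + 1) ^ CHAR('a)" by (simp add: add.commute)
  also have "\<dots> = of_nat k ^ CHAR('a) + 1 ^ CHAR('a)"
    by (rule freshmans_dream[OF CHAR_prime refl])
  finally show ?case using Suc by simp
qed

lemma prime_subfield:
  assumes "(z::'a::finite_field) ^ CHAR('a) = z"
  shows "\<exists>k<CHAR('a). of_nat k = z"
proof -
  let ?p = "CHAR('a)"
  have p1: "1 < ?p" using prime_gt_1_nat[OF CHAR_prime[where 'a='a]] .
  define Q :: "'a poly" where "Q = monom 1 ?p - monom 1 1"
  have cQ: "coeff Q ?p = 1" using p1 by (simp add: Q_def)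
  hence Q0: "Q \<noteq> 0" by auto
  have dQ: "degree Q \<le> ?p" unfolding Q_def
    by (rule degree_diff_le; rule order.trans[OF degree_monom_le]) (use p1 in auto)
  define R where "R = {x. poly Q x = 0}"
  have fR: "finite R" by simp
  have cR: "card R \<le> ?p" using card_poly_roots_bound[OF Q0] dQ unfolding R_def by linarith
  define S where "S = (of_nat ` {..<?p} :: 'a set)"
  have SR: "S \<subseteq> R" unfolding S_def R_def Q_def by (auto simp: poly_monom ofnat_pow_CHAR)
  have "inj_on (of_nat :: nat \<Rightarrow> 'a) {..<?p}" by (auto simp: inj_on_def intro: ofnat_inj_CHAR)
  hence cS: "card S = ?p" unfolding S_def by (simp add: card_image)
  have "S = R" using card_subset_eq[OF fR SR] cS cR card_mono[OF fR SR] by linarith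
  moreover have "z \<in> R" using assms by (simp add: R_def Q_def poly_monom)
  ultimately show ?thesis unfolding S_def by auto
qed

lemma trace_nat: "trace_nat (y::'a::finite_field) < CHAR('a) \<and> of_nat (trace_nat y) = field_trace y"
proof -
  have "\<exists>!k. k < CHAR('a) \<and> of_nat k = field_trace y"
    using prime_subfield[OF trace_pow[of y]] ofnat_inj_CHAR by metis
  thus ?thesis unfolding trace_nat_def by (rule theI')
qed

lemma trace_nat_add: "trace_nat (x + y) = (trace_nat x + trace_nat (y::'a::finite_field)) mod CHAR('a)"
proof -
  have "(of_nat (trace_nat (x+y)) :: 'a) = of_nat (trace_nat x + trace_nat y)"
    using trace_nat[of x] trace_nat[of y] trace_nat[of "x+y"] trace_add[of x y] by simp
  hence "[trace_nat (x+y) = trace_nat x + trace_nat y] (mod CHAR('a))"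
    by (simp only: of_nat_eq_iff_cong_CHAR)
  thus ?thesis using trace_nat[of "x+y"] by (simp add: cong_def)
qed

lemma chi_cis: "chi (y::'a::finite_field) = cis (2 * pi * real (trace_nat y) / real CHAR('a))"
  unfolding chi_def cis_conv_exp by (simp add: field_simps)

lemma chi_add: "chi (x + y) = chi x * chi (y::'a::finite_field)"
proof -
  let ?p = "CHAR('a)"
  define K where "K = trace_nat x + trace_nat y"
  have p0: "real ?p > 0" using CHAR_pos[where 'a='a] by simp
  have "K = ?p * (K div ?p) + K mod ?p" by simp
  hence "real K = real ?p * real (K div ?p) + real (K mod ?p)" by (metis of_nat_add of_nat_mult)
  hence e: "2 * pi * real K / real ?p = 2 * pi * real (K mod ?p) / real ?p + 2 * pi * real (K div ?p)"
    using p0 by (simp add: field_simps)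
  have "chi x * chi y = cis (2 * pi * real K / real ?p)"
    by (simp add: chi_cis cis_mult K_def add_divide_distrib algebra_simps)
  also have "\<dots> = cis (2 * pi * real (K mod ?p) / real ?p) * cis (2 * pi * real (K div ?p))"
    by (simp only: e cis_mult)
  also have "cis (2 * pi * real (K div ?p)) = 1" by (rule cis_multiple_2pi) simp
  finally show ?thesis by (simp add: chi_cis trace_nat_add K_def)
qed

lemma chi_zero: "chi (0::'a::finite_field) = 1"
  using chi_add[of "0::'a" 0] by (simp add: chi_cis)

lemma chi_neg: "chi (- y) = cnj (chi (y::'a::finite_field))"
proof -
  have "chi (- y) * chi y = chi (-y + y)" by (simp only: chi_add)
  hence "chi (- y) * chi y = 1" using chi_zero by simp
  hence "inverse (chi y) = chi (- y)" by (intro inverse_unique) (simp add: mult.commute)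
  moreover have "cnj (chi y) = inverse (chi y)" by (simp add: chi_cis cis_cnj)
  ultimately show ?thesis by simp
qed


lemma trace_nonzero: "\<exists>y::'a::finite_field. field_trace y \<noteq> 0"
proof (rule ccontr)
  assume H: "\<not> ?thesis"
  let ?p = "CHAR('a)" and ?m = "field_degree TYPE('a)"
  have p1: "1 < ?p" using prime_gt_1_nat[OF CHAR_prime[where 'a='a]] .
  have m0: "?m > 0" by (rule field_degree_pos)
  define T :: "'a poly" where "T = (\<Sum>j<?m. monom 1 (?p ^ j))"
  have pT: "poly T y = field_trace y" for y
    by (simp add: T_def poly_sum poly_monom field_trace_def)
  have dT: "degree T \<le> ?p ^ (?m - 1)" unfolding T_def
    by (rule degree_sum_le) (use p1 in \<open>auto intro!: order.trans[OF degree_monom_le] power_increasing\<close>)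
  have "coeff T (?p ^ (?m - 1)) = (\<Sum>j<?m. if ?p ^ j = ?p ^ (?m - 1) then 1 else 0)"
    by (simp add: T_def coeff_sum)
  also have "\<dots> = (\<Sum>j\<in>{?m - 1}. 1)"
    by (rule sum.mono_neutral_cong_right) (use m0 p1 power_inject_exp in auto)
  finally have "coeff T (?p ^ (?m - 1)) = 1" by simp
  hence T0: "T \<noteq> 0" by auto
  have "card {x. poly T x = 0} \<le> ?p ^ (?m - 1)" using card_poly_roots_bound[OF T0] dT by linarith
  moreover have "{x. poly T x = 0} = UNIV" using H pT by auto
  moreover have "?p ^ (?m - 1) < ?p ^ ?m" using p1 m0 by simp
  ultimately show False using field_degree_eq[where 'a='a] by simp
qed

lemma chi_nontrivial: "\<exists>t::'a::finite_field. chi t \<noteq> 1"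
proof -
  obtain y :: 'a where y: "field_trace y \<noteq> 0" using trace_nonzero by blast
  let ?p = "CHAR('a)" and ?k = "trace_nat y"
  have k: "?k < ?p" "?k \<noteq> 0" using trace_nat[of y] y by (metis of_nat_0)+
  have p0: "real ?p > 0" using CHAR_pos[where 'a='a] by simp
  have "chi y \<noteq> 1"
  proof
    assume "chi y = 1"
    hence "cos (2 * pi * real ?k / real ?p) = 1" unfolding chi_cis by (metis complex.sel(1) cis.sel(1) one_complex.sel(1))
    then obtain n :: int where n: "2 * pi * real ?k / real ?p = of_int n * 2 * pi" using cos_one_2pi_int by blast
    hence "real ?k = of_int n * real ?p" using p0 by (simp add: field_simps)
    hence "int ?k = n * int ?p" by (metis of_int_eq_iff of_int_mult of_int_of_nat_eq)
    thus False using k by (metis dvd_imp_le_int dvd_triv_right int_ops(1) less_irrefl mult.commute neq0_conv not_less of_nat_0_less_iff of_nat_less_iff abs_of_nat)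
  qed
  thus ?thesis by blast
qed

definition dot :: "nat \<Rightarrow> (nat \<Rightarrow> 'a::comm_ring_1) \<Rightarrow> (nat \<Rightarrow> 'a) \<Rightarrow> 'a" where
  "dot n x y = (\<Sum>j<n. x j * y j)"

lemma dot_comm: "dot n x y = dot n y x"
  by (simp add: dot_def mult.commute)

lemma dot_add2: "dot n b (\<lambda>j. x j + y j) = dot n b x + dot n b y"
  by (simp add: dot_def distrib_left sum.distrib)

lemma dot_add1: "dot n (\<lambda>j. x j + y j) b = dot n x b + dot n y b"
  by (simp add: dot_def distrib_right sum.distrib)

lemma dot_scale2: "dot n b (\<lambda>j. c * x j) = c * dot n b x"
  by (simp add: dot_def sum_distrib_left algebra_simps)

lemma dot_diff2: "dot n b (\<lambda>j. x j - y j) = dot n b x - dot n b y"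
  by (simp add: dot_def algebra_simps sum_subtractf)

lemma dot_diff1: "dot n (\<lambda>j. x j - y j) b = dot n x b - dot n y b"
  by (simp add: dot_def algebra_simps sum_subtractf)

lemma dot_zero1[simp]: "dot n (\<lambda>_. 0) b = 0" by (simp add: dot_def)
lemma dot_zero2[simp]: "dot n b (\<lambda>_. 0) = 0" by (simp add: dot_def)

lemma words_eq: "words n = (\<lambda>f j. if j < n then f j else 0) ` (PiE {..<n} (\<lambda>_. UNIV))"
proof safe
  fix x :: "nat \<Rightarrow> 'a" assume "x \<in> words n"
  hence "x = (\<lambda>j. if j < n then restrict x {..<n} j else 0)"
    by (auto simp: words_def fun_eq_iff)
  moreover have "restrict x {..<n} \<in> PiE {..<n} (\<lambda>_. UNIV)" by simp
  ultimately show "x \<in> (\<lambda>f j. if j < n then f j else 0) ` (PiE {..<n} (\<lambda>_. UNIV))" by (rule image_eqI)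
qed (auto simp: words_def)

lemma finite_words[simp]: "finite (words n :: (nat \<Rightarrow> 'a::finite_field) set)"
  unfolding words_eq by (intro finite_imageI finite_PiE) auto

lemma card_words: "card (words n :: (nat \<Rightarrow> 'a::finite_field) set) = card (UNIV :: 'a set) ^ n"
proof -
  have "inj_on (\<lambda>f j. if j < n then f j else (0::'a)) (PiE {..<n} (\<lambda>_. UNIV))"
  proof (rule inj_onI, rule ext)
    fix f g j assume f: "f \<in> PiE {..<n} (\<lambda>_. UNIV :: 'a set)" and g: "g \<in> PiE {..<n} (\<lambda>_. UNIV :: 'a set)"
      and e: "(\<lambda>j. if j < n then f j else (0::'a)) = (\<lambda>j. if j < n then g j else 0)"
    show "f j = g j"
    proof (cases "j < n")
      case True thus ?thesis using fun_cong[OF e, of j] by simp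
    next
      case False thus ?thesis using PiE_arb[OF f, of j] PiE_arb[OF g, of j] by simp
    qed
  qed
  thus ?thesis unfolding words_eq by (simp add: card_image card_PiE)
qed

lemma linear_code_words: "linear_code n (words n :: (nat \<Rightarrow> 'a::field) set)"
  by (auto simp: linear_code_def words_def)

lemma lc_add: "linear_code n C \<Longrightarrow> x \<in> C \<Longrightarrow> y \<in> C \<Longrightarrow> (\<lambda>j. x j + y j) \<in> C"
  by (simp add: linear_code_def)
lemma lc_scale: "linear_code n C \<Longrightarrow> x \<in> C \<Longrightarrow> (\<lambda>j. c * x j) \<in> C"
  by (simp add: linear_code_def)
lemma lc_zero: "linear_code n C \<Longrightarrow> (\<lambda>_. 0) \<in> C"
  by (simp add: linear_code_def)
lemma lc_words: "linear_code n C \<Longrightarrow> C \<subseteq> words n"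
  by (simp add: linear_code_def)
lemma lc_diff: "linear_code n C \<Longrightarrow> x \<in> C \<Longrightarrow> y \<in> C \<Longrightarrow> (\<lambda>j. x j - y j) \<in> C"
proof -
  assume a: "linear_code n C" "x \<in> C" "y \<in> C"
  have "(\<lambda>j. x j + (-1) * y j) \<in> C" using a lc_add lc_scale by blast
  thus ?thesis by simp
qed
lemma lc_finite: "linear_code n (C :: (nat \<Rightarrow> 'a::finite_field) set) \<Longrightarrow> finite C"
  by (rule finite_subset[OF lc_words finite_words])

lemma char_sum:
  fixes C :: "(nat \<Rightarrow> 'a::finite_field) set"
  assumes C: "linear_code n C"
  shows "(\<Sum>c\<in>C. chi (dot n b c)) = (if \<forall>c\<in>C. dot n b c = 0 then of_nat (card C) else 0)"
proof (cases "\<forall>c\<in>C. dot n b c = 0")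
  case True thus ?thesis by (simp add: chi_zero)
next
  case False
  then obtain c1 where c1: "c1 \<in> C" "dot n b c1 \<noteq> 0" by auto
  obtain t :: 'a where t: "chi t \<noteq> 1" using chi_nontrivial by blast
  define c0 where "c0 = (\<lambda>j. (t / dot n b c1) * c1 j)"
  have c0: "c0 \<in> C" unfolding c0_def using lc_scale[OF C c1(1)] .
  have dc0: "dot n b c0 = t" unfolding c0_def dot_scale2 using c1 by simp
  let ?S = "\<Sum>c\<in>C. chi (dot n b c)"
  have "?S = (\<Sum>c\<in>C. chi (dot n b (\<lambda>j. c j + c0 j)))"
    by (rule sum.reindex_bij_witness[of _ "\<lambda>c j. c j + c0 j" "\<lambda>c j. c j - c0 j"])
       (use lc_add[OF C _ c0] lc_diff[OF C _ c0] in auto)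
  also have "\<dots> = chi t * ?S"
    by (simp add: dot_add2 chi_add dc0 sum_distrib_left mult.commute)
  finally have "(1 - chi t) * ?S = 0" by (simp add: algebra_simps)
  hence "?S = 0" using t by simp
  thus ?thesis using False by (simp only: if_False) 
qed

lemma dual_words: "dual n C \<subseteq> words n" by (auto simp: dual_def)

lemma dual_iff: "x \<in> dual n C \<longleftrightarrow> x \<in> words n \<and> (\<forall>c\<in>C. dot n x c = 0)"
  by (simp add: dual_def dot_def)

lemma linear_dual: "linear_code n (dual n (C :: (nat \<Rightarrow> 'a::field) set))"
  unfolding linear_code_def
proof (intro conjI ballI allI)
  show "dual n C \<subseteq> words n" by (auto simp: dual_def)
  show "(\<lambda>_. 0) \<in> dual n C" by (simp add: dual_iff words_def)
  fix x y assume x: "x \<in> dual n C" and y: "y \<in> dual n C"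
  thus "(\<lambda>j. x j + y j) \<in> dual n C" by (simp add: dual_iff dot_add1 words_def)
next
  fix c :: 'a and x assume x: "x \<in> dual n C"
  have "dot n (\<lambda>j. c * x j) d = c * dot n x d" for d by (simp add: dot_def sum_distrib_left mult.assoc)
  thus "(\<lambda>j. c * x j) \<in> dual n C" using x by (simp add: dual_iff words_def)
qed

lemma dot_unit: "j < n \<Longrightarrow> dot n c (\<lambda>l. if l = j then 1 else 0) = c j"
  unfolding dot_def by (subst sum.cong[OF refl, of _ _ "\<lambda>l. if l = j then c l else 0"]) auto

lemma unit_words: "j < n \<Longrightarrow> (\<lambda>l. if l = j then 1 else 0) \<in> words n"
  by (simp add: words_def)

lemma words_zero: "c \<in> words n \<Longrightarrow> (\<forall>x\<in>words n. dot n c x = 0) \<Longrightarrow> c = (\<lambda>_. 0)"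
proof (rule ext)
  fix j assume c: "c \<in> words n" and h: "\<forall>x\<in>words n. dot n c x = 0"
  show "c j = 0"
  proof (cases "j < n")
    case True thus ?thesis using h unit_words[OF True] dot_unit[OF True, where c=c] by metis
  next
    case False thus ?thesis using c by (simp add: words_def)
  qed
qed

lemma card_dual:
  fixes C :: "(nat \<Rightarrow> 'a::finite_field) set"
  assumes C: "linear_code n C"
  shows "card C * card (dual n C) = card (UNIV :: 'a set) ^ n"
proof -
  let ?W = "words n :: (nat \<Rightarrow> 'a) set"
  have fC: "finite C" using lc_finite[OF C] .
  have "(\<Sum>x\<in>?W. \<Sum>c\<in>C. chi (dot n x c)) = (\<Sum>x\<in>?W. if x \<in> dual n C then of_nat (card C) else 0)"
    by (rule sum.cong) (auto simp: char_sum[OF C] dual_iff)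
  also have "\<dots> = of_nat (card (dual n C) * card C)"
    using dual_words[of n C] by (simp add: sum.If_cases Int_absorb1)
  finally have 1: "(\<Sum>x\<in>?W. \<Sum>c\<in>C. chi (dot n x c)) = of_nat (card (dual n C) * card C)" .
  have "(\<Sum>x\<in>?W. \<Sum>c\<in>C. chi (dot n x c)) = (\<Sum>c\<in>C. \<Sum>x\<in>?W. chi (dot n c x))"
    by (subst sum.swap) (intro sum.cong refl, metis dot_comm)
  also have "\<dots> = (\<Sum>c\<in>C. if c = (\<lambda>_. 0) then of_nat (card ?W) else 0)"
  proof (rule sum.cong[OF refl])
    fix c assume "c \<in> C"
    hence cW: "c \<in> ?W" using lc_words[OF C] by auto
    show "(\<Sum>x\<in>?W. chi (dot n c x)) = (if c = (\<lambda>_. 0) then of_nat (card ?W) else 0)"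
    proof -
      have e: "(\<forall>x\<in>?W. dot n c x = 0) \<longleftrightarrow> c = (\<lambda>_. 0)" using words_zero[OF cW] by auto
      show ?thesis by (simp only: char_sum[OF linear_code_words, where b=c] e)
    qed
  qed
  also have "\<dots> = of_nat (card ?W)" by (subst sum.delta[OF fC]) (use lc_zero[OF C] in simp)
  finally have "of_nat (card (dual n C) * card C) = (of_nat (card ?W) :: complex)" using 1 by simp
  hence "card (dual n C) * card C = card ?W" by (simp only: of_nat_eq_iff)
  thus ?thesis by (simp add: card_words mult.commute)
qed

lemma double_dual:
  fixes C :: "(nat \<Rightarrow> 'a::finite_field) set"
  assumes C: "linear_code n C"
  shows "dual n (dual n C) = C"
proof -
  have sub: "C \<subseteq> dual n (dual n C)" using lc_words[OF C] by (auto simp: dual_iff; metis dot_comm subsetD)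
  have "card (dual n (dual n C)) * card (dual n C) = card C * card (dual n C)"
    using card_dual[OF linear_dual[of n C]] card_dual[OF C] by (simp add: mult.commute)
  moreover have "card (dual n C) > 0"
    using lc_finite[OF linear_dual] lc_zero[OF linear_dual] by (metis card_gt_0_iff empty_iff)
  ultimately have "card (dual n (dual n C)) = card C" by simp
  hence "C = dual n (dual n C)" by (intro card_subset_eq[OF lc_finite[OF linear_dual] sub]) simp
  thus ?thesis by simp
qed

definition hh :: "nat \<Rightarrow> nat \<Rightarrow> nat" where "hh i j = (if j < i then j else Suc j)"
definition punct :: "nat \<Rightarrow> (nat \<Rightarrow> 'a) \<Rightarrow> (nat \<Rightarrow> 'a)" where "punct i x = (\<lambda>j. x (hh i j))"
definition ext0 :: "nat \<Rightarrow> (nat \<Rightarrow> 'a::zero) \<Rightarrow> (nat \<Rightarrow> 'a)" where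
  "ext0 i y = (\<lambda>j. if j < i then y j else if j = i then 0 else y (j - 1))"

lemma hh_image: "i < n \<Longrightarrow> hh i ` {..<n-1} = {..<n} - {i}"
proof safe
  fix k assume "i < n" "k < n" "k \<notin> hh i ` {..<n-1}"
  moreover have "k \<noteq> i \<Longrightarrow> k = hh i (if k < i then k else k - 1)" by (auto simp: hh_def)
  moreover have "k \<noteq> i \<Longrightarrow> (if k < i then k else k - 1) < n - 1" using calculation by auto
  ultimately show "k = i" by blast
qed (auto simp: hh_def split: if_splits)

lemma hh_inj: "inj (hh i)" by (auto simp: inj_on_def hh_def split: if_splits)

lemma sum_skip: "i < n \<Longrightarrow> (\<Sum>j\<in>{..<n} - {i}. g j) = (\<Sum>j<n-1. g (hh i j))"
proof -
  assume i: "i < n"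
  have "(\<Sum>j\<in>{..<n} - {i}. g j) = sum g (hh i ` {..<n-1})" using hh_image[OF i] by simp
  also have "\<dots> = sum (g \<circ> hh i) {..<n-1}" by (rule sum.reindex) (rule inj_on_subset[OF hh_inj], simp)
  finally show ?thesis by simp
qed

lemma card_supp_skip:
  assumes "i < n"
  shows "card {j. j < n \<and> g j \<noteq> (0::'a::zero)} = card {j. j < n-1 \<and> g (hh i j) \<noteq> 0} + (if g i \<noteq> 0 then 1 else 0)"
proof -
  have "{j. j < n \<and> g j \<noteq> 0} - {i} = hh i ` {j. j < n-1 \<and> g (hh i j) \<noteq> 0}"
  proof safe
    fix j assume j: "j < n" "g j \<noteq> 0" "j \<notin> hh i ` {j. j < n - 1 \<and> g (hh i j) \<noteq> 0}"
    define j' where "j' = (if j < i then j else j - 1)"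
    show "j = i"
    proof (rule ccontr)
      assume "j \<noteq> i"
      hence "hh i j' = j" "j' < n - 1" using j assms by (auto simp: j'_def hh_def)
      thus False using j by auto
    qed
  next
    fix j assume "j < n - 1" show "hh i j < n" using \<open>j < n - 1\<close> assms by (auto simp: hh_def)
  next
    fix j assume "j < n - 1" "hh i j = i" thus False by (auto simp: hh_def split: if_splits)
  qed
  hence c: "card ({j. j < n \<and> g j \<noteq> 0} - {i}) = card {j. j < n-1 \<and> g (hh i j) \<noteq> 0}"
    by (simp add: card_image[OF inj_on_subset[OF hh_inj subset_UNIV]])
  show ?thesis
  proof (cases "g i \<noteq> 0")
    case True
    hence iin: "i \<in> {j. j < n \<and> g j \<noteq> 0}" using assms by simp
    moreover have "finite {j. j < n \<and> g j \<noteq> 0}" by simp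
    ultimately have "card {j. j < n \<and> g j \<noteq> 0} > 0" by (auto simp: card_gt_0_iff)
    thus ?thesis using c True card_Diff_singleton[OF iin] by simp
  next
    case False
    hence "{j. j < n \<and> g j \<noteq> 0} - {i} = {j. j < n \<and> g j \<noteq> 0}" by auto
    thus ?thesis using c False by simp
  qed
qed

lemma wt_punct: "i < n \<Longrightarrow> wt n x = wt (n-1) (punct i x) + (if x i \<noteq> 0 then 1 else 0)"
  unfolding wt_def punct_def by (rule card_supp_skip)

lemma ext0_hh[simp]: "ext0 i y (hh i j) = y j"
  by (simp add: ext0_def hh_def)

lemma ext0_i[simp]: "ext0 i y i = 0"
  by (simp add: ext0_def)

lemma wt_ext0: "i < n \<Longrightarrow> wt n (ext0 i y) = wt (n-1) y"
  unfolding wt_def using card_supp_skip[of i n "ext0 i y"] by simp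

lemma dot_ext0: "i < n \<Longrightarrow> dot n (ext0 i y) c = dot (n-1) y (punct i c)"
proof -
  assume i: "i < n"
  have "dot n (ext0 i y) c = (\<Sum>j\<in>{..<n} - {i}. ext0 i y j * c j)"
    unfolding dot_def using i by (subst sum.remove[of _ i]) auto
  also have "\<dots> = dot (n-1) y (punct i c)"
    by (simp add: sum_skip[OF i] dot_def punct_def)
  finally show ?thesis .
qed

lemma punct_words: "i < n \<Longrightarrow> x \<in> words n \<Longrightarrow> punct i x \<in> words (n-1)"
  by (auto simp: words_def punct_def hh_def)

lemma ext0_words: "i < n \<Longrightarrow> y \<in> words (n-1) \<Longrightarrow> ext0 i y \<in> words n"
  by (auto simp: words_def ext0_def)

lemma ext0_nz: "y \<noteq> (\<lambda>_. 0) \<Longrightarrow> ext0 i y \<noteq> (\<lambda>_. 0)"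
  by (metis ext0_hh)

lemma linear_punct:
  assumes "linear_code n C" "i < n"
  shows "linear_code (n-1) (punct i ` C)"
  unfolding linear_code_def
proof (intro conjI ballI allI)
  show "punct i ` C \<subseteq> words (n - 1)" using lc_words[OF assms(1)] punct_words[OF assms(2)] by blast
  have "(\<lambda>_. 0) = punct i (\<lambda>_. 0)" by (simp add: punct_def)
  thus "(\<lambda>_. 0) \<in> punct i ` C"
    using lc_zero[OF assms(1)] by (rule image_eqI)
  fix x y assume "x \<in> punct i ` C" "y \<in> punct i ` C"
  then obtain u v where "u \<in> C" "v \<in> C" "x = punct i u" "y = punct i v" by auto
  hence "(\<lambda>j. x j + y j) = punct i (\<lambda>j. u j + v j)" by (simp add: punct_def)
  thus "(\<lambda>j. x j + y j) \<in> punct i ` C"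
    using lc_add[OF assms(1) \<open>u \<in> C\<close> \<open>v \<in> C\<close>] by (rule image_eqI)
next
  fix c x assume "x \<in> punct i ` C"
  then obtain u where "u \<in> C" "x = punct i u" by auto
  hence "(\<lambda>j. c * x j) = punct i (\<lambda>j. c * u j)" by (simp add: punct_def)
  thus "(\<lambda>j. c * x j) \<in> punct i ` C"
    using lc_scale[OF assms(1) \<open>u \<in> C\<close>] by (rule image_eqI)
qed

lemma wt_le: "wt n x \<le> n"
proof -
  have "card {j. j < n \<and> x j \<noteq> 0} \<le> card {..<n}" by (rule card_mono) auto
  thus ?thesis by (simp add: wt_def)
qed

lemma min_dist_le:
  assumes "c \<in> C" "c \<noteq> (\<lambda>_. 0)"
  shows "min_dist n C \<le> wt n c"
proof -
  have "finite {wt n c | c. c \<in> C \<and> c \<noteq> (\<lambda>_. 0)}"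
    by (rule finite_subset[of _ "{..n}"]) (auto simp: wt_le)
  thus ?thesis unfolding min_dist_def using assms by (intro Min_le) auto
qed

lemma wt_zero: "x \<in> words n \<Longrightarrow> wt n x = 0 \<Longrightarrow> x = (\<lambda>_. 0)"
proof (rule ext)
  fix j assume x: "x \<in> words n" and w: "wt n x = 0"
  have "finite {j. j < n \<and> x j \<noteq> 0}" by simp
  hence e: "{j. j < n \<and> x j \<noteq> 0} = {}" using w by (simp add: wt_def)
  show "x j = 0"
  proof (cases "j < n")
    case True thus ?thesis using e by blast
  next
    case False thus ?thesis using x by (simp add: words_def)
  qed
qed

lemma punct_inj:
  assumes C: "linear_code n C" and i: "i < n" and d: "min_dist n C \<ge> 2"
  shows "inj_on (punct i) C"
proof (rule inj_onI, rule ccontr)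
  fix x y assume x: "x \<in> C" and y: "y \<in> C" and e: "punct i x = punct i y" and ne: "x \<noteq> y"
  define z where "z = (\<lambda>j. x j - y j)"
  have z: "z \<in> C" unfolding z_def by (rule lc_diff[OF C x y])
  have zn: "z \<noteq> (\<lambda>_. 0)" using ne by (auto simp: z_def fun_eq_iff)
  have "x (hh i j) = y (hh i j)" for j using fun_cong[OF e, of j] by (simp add: punct_def)
  hence "punct i z = (\<lambda>_. 0)" by (simp add: z_def punct_def)
  hence "wt (n-1) (punct i z) = 0" by (simp add: wt_def)
  hence "wt n z \<le> 1" using wt_punct[OF i, of z] by simp
  thus False using min_dist_le[OF z zn, of n] d by simp
qed

definition Pm :: "(nat \<Rightarrow> 'a::finite_field) set \<Rightarrow> (nat \<Rightarrow> 'a) set \<Rightarrow> 'a op" where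
  "Pm E D = (\<lambda>x y. if x \<in> D \<and> y \<in> D \<and> (\<lambda>j. x j - y j) \<in> E then 1 / of_nat (card E) else 0)"

lemma lc_sub_trans:
  assumes E: "linear_code m E" and h1: "(\<lambda>j. x j - w j) \<in> E" and h2: "(\<lambda>j. w j - y j) \<in> E"
  shows "(\<lambda>j. x j - y j) \<in> E"
proof -
  have "(\<lambda>j. (x j - w j) + (w j - y j)) \<in> E" by (rule lc_add[OF E h1 h2])
  thus ?thesis by simp
qed

lemma lc_sub_add:
  assumes D: "linear_code m D" and h1: "(\<lambda>j. x j - y j) \<in> D" and h2: "y \<in> D"
  shows "x \<in> D"
proof -
  have "(\<lambda>j. (x j - y j) + y j) \<in> D" by (rule lc_add[OF D h1 h2])
  thus ?thesis by simp
qed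

lemma lc_sub_sym:
  assumes E: "linear_code m E" and h: "(\<lambda>j. x j - y j) \<in> E"
  shows "(\<lambda>j. y j - x j) \<in> E"
proof -
  have "(\<lambda>j. (-1) * (x j - y j)) \<in> E" by (rule lc_scale[OF E h])
  thus ?thesis by simp
qed

lemma lc_sub_cancel:
  assumes E: "linear_code m E" and h1: "(\<lambda>j. x j - y j) \<in> E" and h2: "(\<lambda>j. w j - y j) \<in> E"
  shows "(\<lambda>j. x j - w j) \<in> E"
  using lc_sub_trans[OF E h1 lc_sub_sym[OF E h2]] .

locale qsetup =
  fixes m :: nat and E D :: "(nat \<Rightarrow> 'a::finite_field) set"
  assumes E: "linear_code m E" and D: "linear_code m D" and ED: "E \<subseteq> D"
begin

abbreviation "P \<equiv> Pm E D"
abbreviation "W \<equiv> (words m :: (nat \<Rightarrow> 'a) set)"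

lemma cardE: "card E > 0"
  using lc_finite[OF E] lc_zero[OF E] card_gt_0_iff by blast

lemma P_supp: "P x y \<noteq> 0 \<Longrightarrow> x \<in> D \<and> y \<in> D \<and> (\<lambda>j. x j - y j) \<in> E"
  by (simp add: Pm_def split: if_splits)

lemma P_words: "P x y \<noteq> 0 \<Longrightarrow> x \<in> W \<and> y \<in> W"
  using P_supp lc_words[OF D] by blast

lemma sumPP:
  "(\<Sum>w\<in>W. P x w * P w y * chi (dot m b w)) =
     P x y * chi (dot m b y) * (\<Sum>e\<in>E. chi (dot m b e)) / of_nat (card E)"
proof (cases "y \<in> D \<and> (\<lambda>j. x j - y j) \<in> E")
  case True
  hence y: "y \<in> D" and xy: "(\<lambda>j. x j - y j) \<in> E" by auto
  have x: "x \<in> D" using lc_sub_add[OF D _ y] xy ED by blast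
  have yW: "y \<in> W" using y lc_words[OF D] by blast
  let ?c = "1 / of_nat (card E) :: complex"
  have tm: "P x w * P w y * chi (dot m b w) = (if (\<lambda>j. w j - y j) \<in> E then ?c * ?c * chi (dot m b w) else 0)" for w
  proof (cases "(\<lambda>j. w j - y j) \<in> E")
    case True
    have "w \<in> D" using lc_sub_add[OF D _ y] True ED by blast
    moreover have "(\<lambda>j. x j - w j) \<in> E" by (rule lc_sub_cancel[OF E xy True])
    ultimately show ?thesis using True x y by (simp add: Pm_def)
  next
    case False thus ?thesis by (simp add: Pm_def)
  qed
  have "(\<Sum>w\<in>W. P x w * P w y * chi (dot m b w)) = (\<Sum>w\<in>W. if (\<lambda>j. w j - y j) \<in> E then ?c * ?c * chi (dot m b w) else 0)"
    by (simp only: tm)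
  also have "\<dots> = (\<Sum>w\<in>{w\<in>W. (\<lambda>j. w j - y j) \<in> E}. ?c * ?c * chi (dot m b w))"
    by (rule sum.inter_filter[symmetric]) simp
  also have "\<dots> = (\<Sum>e\<in>E. ?c * ?c * chi (dot m b (\<lambda>j. e j + y j)))"
  proof (rule sum.reindex_bij_witness[of _ "\<lambda>e j. e j + y j" "\<lambda>w j. w j - y j"])
    fix e assume e: "e \<in> E"
    have eW: "e \<in> W" using e lc_words[OF E] by blast
    show "(\<lambda>j. e j + y j) \<in> {w \<in> W. (\<lambda>j. w j - y j) \<in> E}"
      using lc_add[OF linear_code_words eW yW] e by simp
  qed (auto simp: lc_diff)
  also have "\<dots> = ?c * ?c * chi (dot m b y) * (\<Sum>e\<in>E. chi (dot m b e))"
    by (simp add: dot_add2 chi_add sum_distrib_left sum_divide_distrib mult_ac)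
  also have "\<dots> = P x y * chi (dot m b y) * (\<Sum>e\<in>E. chi (dot m b e)) / of_nat (card E)"
    using x y xy by (simp add: Pm_def)
  finally show ?thesis .
next
  case False
  have z: "P x w * P w y * chi (dot m b w) = 0" for w
  proof (rule ccontr)
    assume "P x w * P w y * chi (dot m b w) \<noteq> 0"
    hence "P x w \<noteq> 0" "P w y \<noteq> 0" by auto
    hence "(\<lambda>j. x j - w j) \<in> E" "(\<lambda>j. w j - y j) \<in> E" "y \<in> D" using P_supp by blast+
    thus False using False lc_sub_trans[OF E] by blast
  qed
  moreover have "P x y = 0" using False unfolding Pm_def by auto
  ultimately show ?thesis by (simp only: z sum.neutral_const) simp
qed

lemma P_idem: "op_mult m P P = P"
proof (intro ext)
  fix x y
  have "op_mult m P P x y = (\<Sum>w\<in>W. P x w * P w y * chi (dot m (\<lambda>_. 0) w))"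
    by (simp add: op_mult_def chi_zero)
  also have "\<dots> = P x y" using sumPP[of x y "\<lambda>_. 0"] cardE by (simp add: chi_zero)
  finally show "op_mult m P P x y = P x y" .
qed

lemma P_sym: "P x y = P y x"
  using lc_sub_sym[OF E, of x y] lc_sub_sym[OF E, of y x] by (auto simp: Pm_def)

lemma P_real: "cnj (P x y) = P x y"
  by (simp add: Pm_def)

lemma P_adj: "op_adj P = P"
  unfolding op_adj_def by (intro ext) (simp only: P_real P_sym)

lemma P_trace: "(\<Sum>x\<in>W. P x x) = of_nat (card D) / of_nat (card E)"
proof -
  have "(\<Sum>x\<in>W. P x x) = (\<Sum>x\<in>W. if x \<in> D then 1 / of_nat (card E) else 0)"
    using lc_zero[OF E] by (intro sum.cong) (simp_all add: Pm_def)
  also have "\<dots> = of_nat (card D) / of_nat (card E)"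
    using lc_words[OF D] by (simp add: sum.If_cases Int_absorb1)
  finally show ?thesis .
qed

lemma P_proj:
  assumes "card D = card E * card (UNIV :: 'a set) ^ k"
  shows "is_code_projector m k P"
  unfolding is_code_projector_def
proof (intro conjI allI impI)
  fix x y :: "nat \<Rightarrow> 'a" assume "x \<notin> W \<or> y \<notin> W"
  thus "P x y = 0" using P_words by blast
next
  show "op_mult m P P = P" by (rule P_idem)
  show "op_adj P = P" by (rule P_adj)
  show "(\<Sum>x\<in>W. P x x) = of_nat (card (UNIV :: 'a set) ^ k)"
    using cardE by (simp add: P_trace assms)
qed

end

lemma XZ_entry: "op_mult m (Xop m a) (Zop m b) x y =
   (if y \<in> words m \<and> x = (\<lambda>j. y j + a j) then chi (dot m b y) else 0)"
proof -
  have "op_mult m (Xop m a) (Zop m b) x y =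
     (\<Sum>z\<in>words m. if z = y then (if x = (\<lambda>j. y j + a j) then chi (dot m b y) else 0) else 0)"
    unfolding op_mult_def Xop_def Zop_def dot_def by (intro sum.cong refl) auto
  also have "\<dots> = (if y \<in> words m \<and> x = (\<lambda>j. y j + a j) then chi (dot m b y) else 0)"
    by (simp add: sum.delta)
  finally show ?thesis .
qed

lemma adj_entry: "op_adj (op_mult m (Xop m a) (Zop m b)) x y =
   (if x \<in> words m \<and> y = (\<lambda>j. x j + a j) then cnj (chi (dot m b x)) else 0)"
  unfolding op_adj_def XZ_entry by simp

lemma M_entry:
  assumes a1: "a1 \<in> words m"
  shows "op_mult m (op_adj (op_mult m (Xop m a1) (Zop m b1))) (op_mult m (Xop m a2) (Zop m b2)) x y =
    (if x \<in> words m \<and> y \<in> words m \<and> (\<lambda>j. x j + a1 j) = (\<lambda>j. y j + a2 j)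
     then cnj (chi (dot m b1 x)) * chi (dot m b2 y) else 0)"
proof -
  let ?v = "if x \<in> words m \<and> y \<in> words m \<and> (\<lambda>j. x j + a1 j) = (\<lambda>j. y j + a2 j)
     then cnj (chi (dot m b1 x)) * chi (dot m b2 y) else 0"
  have "op_mult m (op_adj (op_mult m (Xop m a1) (Zop m b1))) (op_mult m (Xop m a2) (Zop m b2)) x y =
     (\<Sum>z\<in>words m. if z = (\<lambda>j. x j + a1 j) then ?v else 0)"
    unfolding op_mult_def[of m "op_adj _"] adj_entry XZ_entry by (intro sum.cong refl) auto
  also have "\<dots> = (if (\<lambda>j. x j + a1 j) \<in> words m then ?v else 0)"
    by (simp add: sum.delta)
  also have "\<dots> = ?v"
    using lc_add[OF linear_code_words _ a1, of x] by auto
  finally show ?thesis .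
qed

lemma wt_diff: "wt m (\<lambda>j. u j - v j) \<le> wt m u + wt m (v :: nat \<Rightarrow> 'a::ab_group_add)"
proof -
  have "{j. j < m \<and> u j - v j \<noteq> 0} \<subseteq> {j. j < m \<and> u j \<noteq> 0} \<union> {j. j < m \<and> v j \<noteq> 0}" by auto
  hence "card {j. j < m \<and> u j - v j \<noteq> 0} \<le> card ({j. j < m \<and> u j \<noteq> 0} \<union> {j. j < m \<and> v j \<noteq> 0})"
    by (intro card_mono) auto
  also have "\<dots> \<le> card {j. j < m \<and> u j \<noteq> 0} + card {j. j < m \<and> v j \<noteq> 0}" by (rule card_Un_le)
  finally show ?thesis by (simp add: wt_def)
qed

locale qcode = qsetup m E D for m and E D :: "(nat \<Rightarrow> 'a::finite_field) set" +
  fixes dx dz :: nat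
  assumes dx1: "dx \<ge> 1" and dz1: "dz \<ge> 1"
    and hx: "\<And>a. a \<in> D \<Longrightarrow> a \<noteq> (\<lambda>_. 0) \<Longrightarrow> dx \<le> wt m a"
    and hz: "\<And>b. b \<in> dual m E \<Longrightarrow> b \<noteq> (\<lambda>_. 0) \<Longrightarrow> dz \<le> wt m b"
begin

lemma KL: "corrects m P (errors m ((dx - 1) div 2) ((dz - 1) div 2))"
  unfolding corrects_def
proof (intro ballI)
  fix E1 E2 :: "'a op" assume "E1 \<in> errors m ((dx - 1) div 2) ((dz - 1) div 2)" "E2 \<in> errors m ((dx - 1) div 2) ((dz - 1) div 2)"
  then obtain a1 b1 a2 b2 :: "nat \<Rightarrow> 'a" where E1: "E1 = op_mult m (Xop m a1) (Zop m b1)" and E2: "E2 = op_mult m (Xop m a2) (Zop m b2)"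
    and a1: "a1 \<in> W" "wt m a1 \<le> (dx - 1) div 2" and b1: "b1 \<in> W" "wt m b1 \<le> (dz - 1) div 2"
    and a2: "a2 \<in> W" "wt m a2 \<le> (dx - 1) div 2" and b2: "b2 \<in> W" "wt m b2 \<le> (dz - 1) div 2"
    unfolding errors_def by blast
  define a where "a = (\<lambda>j. a2 j - a1 j)"
  define b where "b = (\<lambda>j. b2 j - b1 j)"
  have aW: "a \<in> W" unfolding a_def by (rule lc_diff[OF linear_code_words a2(1) a1(1)])
  have bW: "b \<in> W" unfolding b_def by (rule lc_diff[OF linear_code_words b2(1) b1(1)])
  have wa: "wt m a < dx" using wt_diff[of m a2 a1] a1 a2 dx1 unfolding a_def by linarith
  have wb: "wt m b < dz" using wt_diff[of m b2 b1] b1 b2 dz1 unfolding b_def by linarith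
  define M where "M = op_mult m (op_adj E1) E2"
  have Me: "M x y = (if x \<in> W \<and> y \<in> W \<and> (\<lambda>j. x j + a1 j) = (\<lambda>j. y j + a2 j)
     then cnj (chi (dot m b1 x)) * chi (dot m b2 y) else 0)" for x y
    unfolding M_def E1 E2 by (rule M_entry[OF a1(1)])
  have goal: "\<exists>c. op_mult m P (op_mult m M P) = (\<lambda>x y. c * P x y)"
  proof (cases "a = (\<lambda>_. 0)")
    case True
    have a12: "a2 j = a1 j" for j using fun_cong[OF True, of j] by (simp add: a_def)
    have eqv: "((\<lambda>j. x j + a1 j) = (\<lambda>j. y j + a2 j)) \<longleftrightarrow> y = x" for x y :: "nat \<Rightarrow> 'a"
      by (auto simp: a12 fun_eq_iff)
    have chib: "cnj (chi (dot m b1 x)) * chi (dot m b2 x) = chi (dot m b x)" for x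
    proof -
      have "cnj (chi (dot m b1 x)) * chi (dot m b2 x) = chi (- dot m b1 x + dot m b2 x)"
        by (simp only: chi_add chi_neg)
      also have "- dot m b1 x + dot m b2 x = dot m b x" by (simp add: b_def dot_diff1)
      finally show ?thesis .
    qed
    have Me2: "M x z = (if z = x then (if x \<in> W then chi (dot m b x) else 0) else 0)" for x z
      unfolding Me eqv using chib by auto
    have MP: "op_mult m M P x y = chi (dot m b x) * P x y" for x y
    proof -
      have "op_mult m M P x y = (\<Sum>z\<in>W. if z = x then (if x \<in> W then chi (dot m b x) * P x y else 0) else 0)"
        unfolding op_mult_def Me2 by (intro sum.cong refl) auto
      also have "\<dots> = (if x \<in> W then chi (dot m b x) * P x y else 0)" by (simp add: sum.delta)
      also have "\<dots> = chi (dot m b x) * P x y" using P_words[of x y] by auto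
      finally show ?thesis .
    qed
    have PMP: "op_mult m P (op_mult m M P) x y = P x y * chi (dot m b y) * (\<Sum>e\<in>E. chi (dot m b e)) / of_nat (card E)" for x y
    proof -
      have "op_mult m P (op_mult m M P) x y = (\<Sum>w\<in>W. P x w * P w y * chi (dot m b w))"
        unfolding op_mult_def[of m P] MP by (intro sum.cong refl) (simp add: mult_ac)
      also have "\<dots> = P x y * chi (dot m b y) * (\<Sum>e\<in>E. chi (dot m b e)) / of_nat (card E)" by (rule sumPP)
      finally show ?thesis .
    qed
    show ?thesis
    proof (cases "\<forall>e\<in>E. dot m b e = 0")
      case True
      hence "b \<in> dual m E" using bW by (simp add: dual_iff)
      hence b0: "b = (\<lambda>_. 0)" using hz wb by (meson not_le)
      have "op_mult m P (op_mult m M P) x y = 1 * P x y" for x y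
        using PMP[of x y] cardE by (simp add: b0 chi_zero char_sum[OF E])
      thus ?thesis by blast
    next
      case False
      have "op_mult m P (op_mult m M P) x y = 0 * P x y" for x y
        using PMP[of x y] False by (simp add: char_sum[OF E])
      thus ?thesis by blast
    qed
  next
    case False
    have aD: "a \<notin> D" using hx[of a] False wa by (meson not_le)
    have "op_mult m P (op_mult m M P) x y = 0 * P x y" for x y
    proof -
      have ww: "P x w * op_mult m M P w y = 0" if "w \<in> W" for w
      proof (cases "w \<in> D")
        case False thus ?thesis using P_supp[of x w] by auto
      next
        case wD: True
        have zz: "M w z * P z y = 0" for z
        proof (rule ccontr)
          assume "M w z * P z y \<noteq> 0"
          hence "M w z \<noteq> 0" "P z y \<noteq> 0" by auto
          hence e: "(\<lambda>j. w j + a1 j) = (\<lambda>j. z j + a2 j)" and zD: "z \<in> D"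
            using Me[of w z] P_supp[of z y] by (auto split: if_splits)
          have "(\<lambda>j. w j - z j) = a"
          proof
            fix j show "w j - z j = a j" using fun_cong[OF e, of j] by (simp add: a_def algebra_simps)
          qed
          thus False using lc_diff[OF D wD zD] aD by simp
        qed
        have "op_mult m M P w y = 0" unfolding op_mult_def by (intro sum.neutral ballI zz)
        thus ?thesis by simp
      qed
      have "op_mult m P (op_mult m M P) x y = 0" unfolding op_mult_def[of m P] by (intro sum.neutral ballI ww)
      thus ?thesis by simp
    qed
    thus ?thesis by blast
  qed
  thus "\<exists>c. op_mult m P (op_mult m (op_mult m (op_adj E1) E2) P) = (\<lambda>x y. c * P x y)"
    unfolding M_def .
qed

end

lemma dual_anti: "A \<subseteq> B \<Longrightarrow> dual m B \<subseteq> dual m A"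
  by (auto simp: dual_iff subset_iff)

theorem theorem6:
  fixes C1 C2 :: "(nat \<Rightarrow> 'a::finite_field) set"
    and n k1 k2 i :: nat
  assumes "n \<ge> 2"
    and "linear_code n C1" and "code_dim C1 k1"
    and "linear_code n C2" and "code_dim C2 k2"
    and "C2 \<subset> C1"
    and "i < n"
    and "min_dist n C1 \<ge> 2"
    and "min_dist n (dual n C2) \<ge> 2"
    and "\<exists>c\<in>dual n C2. c \<noteq> (\<lambda>_. 0) \<and> c i = 0"
  shows "((\<exists>c\<in>C1. c \<noteq> (\<lambda>_. 0) \<and> wt n c = min_dist n C1 \<and> c i \<noteq> 0) \<longrightarrow>
           (\<exists>dz dx (P :: 'a op). is_AQECC TYPE('a) (n - 1) (k1 - k2) dz dx P \<and>
              dz \<ge> min_dist n C1 - 1 \<and> dx \<ge> min_dist n (dual n C2)))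
       \<and> (\<not> (\<exists>c\<in>C1. c \<noteq> (\<lambda>_. 0) \<and> wt n c = min_dist n C1 \<and> c i \<noteq> 0) \<longrightarrow>
           (\<exists>dz dx (P :: 'a op). is_AQECC TYPE('a) (n - 1) (k1 - k2) dz dx P \<and>
              dz \<ge> min_dist n C1 \<and> dx \<ge> min_dist n (dual n C2) \<and>
              min_dist n (dual n C2) \<ge> 2))"
proof -
  note C1 = assms(2) and C2 = assms(4) and sub = assms(6) and i = assms(7)
  define d1 where "d1 = min_dist n C1"
  define \<delta> where "\<delta> = min_dist n (dual n C2)"
  define q where "q = card (UNIV :: 'a set)"
  define A1 where "A1 = punct i ` C1"
  define A2 where "A2 = punct i ` C2"
  define E where "E = dual (n-1) A1"
  define D where "D = dual (n-1) A2"
  have lin1: "linear_code (n-1) A1" unfolding A1_def by (rule linear_punct[OF C1 i])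
  have lin2: "linear_code (n-1) A2" unfolding A2_def by (rule linear_punct[OF C2 i])
  have A21: "A2 \<subseteq> A1" unfolding A1_def A2_def using sub by auto
  have inj1: "inj_on (punct i) C1" using punct_inj[OF C1 i] assms(8) by simp
  have inj2: "inj_on (punct i) C2" using inj_on_subset[OF inj1] sub by auto
  have cA1: "card A1 = q ^ k1" unfolding A1_def q_def using card_image[OF inj1] assms(3) by (simp add: code_dim_def)
  have cA2: "card A2 = q ^ k2" unfolding A2_def q_def using card_image[OF inj2] assms(5) by (simp add: code_dim_def)
  have q1: "q > 1"
  proof -
    have "card {0::'a, 1} \<le> q" unfolding q_def by (rule card_mono) auto
    thus ?thesis by simp
  qed
  have "card C2 < card C1" by (rule psubset_card_mono[OF lc_finite[OF C1] sub])
  hence "q ^ k2 < q ^ k1" using assms(3,5) by (simp add: code_dim_def q_def)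
  hence k21: "k2 < k1" using q1 power_less_imp_less_exp by blast
  have linE: "linear_code (n-1) E" unfolding E_def by (rule linear_dual)
  have linD: "linear_code (n-1) D" unfolding D_def by (rule linear_dual)
  have ED: "E \<subseteq> D" unfolding E_def D_def by (rule dual_anti[OF A21])
  have cE: "card A1 * card E = q ^ (n-1)" unfolding E_def q_def by (rule card_dual[OF lin1])
  have cD: "card A2 * card D = q ^ (n-1)" unfolding D_def q_def by (rule card_dual[OF lin2])
  have cDE: "card D = card E * q ^ (k1 - k2)"
  proof -
    have "q ^ k2 * card D = q ^ k2 * (card E * q ^ (k1 - k2))"
      using cE cD cA1 cA2 k21 by (simp add: power_add[symmetric] mult_ac)
    thus ?thesis using q1 by simp
  qed
  have hx: "\<delta> \<le> wt (n-1) a" if aD: "a \<in> D" and a0: "a \<noteq> (\<lambda>_. 0)" for a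
  proof -
    have aW: "a \<in> words (n-1)" using aD lc_words[OF linD] by blast
    have "ext0 i a \<in> dual n C2"
      unfolding dual_iff
    proof (intro conjI ballI)
      show "ext0 i a \<in> words n" by (rule ext0_words[OF i aW])
      fix c assume c: "c \<in> C2"
      have "punct i c \<in> A2" unfolding A2_def using c by blast
      thus "dot n (ext0 i a) c = 0" using aD unfolding D_def dual_iff dot_ext0[OF i] by blast
    qed
    hence "\<delta> \<le> wt n (ext0 i a)" unfolding \<delta>_def by (rule min_dist_le[OF _ ext0_nz[OF a0]])
    thus ?thesis using wt_ext0[OF i, of a] by linarith
  qed
  have wtb: "wt (n-1) b + (if c i \<noteq> 0 then 1 else 0) = wt n c \<and> d1 \<le> wt n c \<and> c \<in> C1 \<and> c \<noteq> (\<lambda>_. 0)"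
    if b: "b \<in> A1" "b \<noteq> (\<lambda>_. 0)" and c: "c \<in> C1" "b = punct i c" for b c
  proof -
    have nz: "c \<noteq> (\<lambda>_. 0)" using b c by (auto simp: punct_def)
    have "d1 \<le> wt n c" unfolding d1_def by (rule min_dist_le[OF c(1) nz])
    thus ?thesis using wt_punct[OF i, of c] c nz by simp
  qed
  have key: "\<exists>P. is_AQECC TYPE('a) (n - 1) (k1 - k2) dz \<delta> P"
    if dz1: "dz \<ge> 1" and hz: "\<And>b. b \<in> A1 \<Longrightarrow> b \<noteq> (\<lambda>_. 0) \<Longrightarrow> dz \<le> wt (n-1) b" for dz
  proof -
    interpret qcode "n-1" E D \<delta> dz
    proof
      show "linear_code (n-1) E" by (rule linE)
      show "linear_code (n-1) D" by (rule linD)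
      show "E \<subseteq> D" by (rule ED)
      show "1 \<le> \<delta>" using assms(9) unfolding \<delta>_def by simp
      show "1 \<le> dz" by (rule dz1)
      show "\<And>a. a \<in> D \<Longrightarrow> a \<noteq> (\<lambda>_. 0) \<Longrightarrow> \<delta> \<le> wt (n - 1) a" by (rule hx)
      show "\<And>b. b \<in> dual (n - 1) E \<Longrightarrow> b \<noteq> (\<lambda>_. 0) \<Longrightarrow> dz \<le> wt (n - 1) b"
        using hz double_dual[OF lin1] unfolding E_def by simp
    qed
    have "is_AQECC TYPE('a) (n - 1) (k1 - k2) dz \<delta> (Pm E D)"
      unfolding is_AQECC_def using P_proj[OF cDE[unfolded q_def]] KL by simp
    thus ?thesis by blast
  qed
  have part1: "\<exists>P. is_AQECC TYPE('a) (n - 1) (k1 - k2) (d1 - 1) \<delta> P"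
  proof (rule key)
    show "1 \<le> d1 - 1" using assms(8) unfolding d1_def by simp
    fix b assume b: "b \<in> A1" "b \<noteq> (\<lambda>_. 0)"
    then obtain c where c: "c \<in> C1" "b = punct i c" unfolding A1_def by blast
    have w: "wt (n-1) b + (if c i \<noteq> 0 then 1 else 0) = wt n c" "d1 \<le> wt n c"
      using wtb[OF b c] by auto
    show "d1 - 1 \<le> wt (n-1) b"
    proof (cases "c i \<noteq> 0")
      case True thus ?thesis using w by simp
    next
      case False thus ?thesis using w by simp
    qed
  qed
  have part2: "\<exists>P. is_AQECC TYPE('a) (n - 1) (k1 - k2) d1 \<delta> P"
    if H: "\<not> (\<exists>c\<in>C1. c \<noteq> (\<lambda>_. 0) \<and> wt n c = d1 \<and> c i \<noteq> 0)"
  proof (rule key)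
    show "1 \<le> d1" using assms(8) unfolding d1_def by simp
    fix b assume b: "b \<in> A1" "b \<noteq> (\<lambda>_. 0)"
    then obtain c where c: "c \<in> C1" "b = punct i c" unfolding A1_def by blast
    have w: "wt (n-1) b + (if c i \<noteq> 0 then 1 else 0) = wt n c" "d1 \<le> wt n c" "c \<noteq> (\<lambda>_. 0)"
      using wtb[OF b c] by auto
    show "d1 \<le> wt (n-1) b"
    proof (cases "c i \<noteq> 0")
      case True
      hence "wt n c \<noteq> d1" using H c w(3) by blast
      thus ?thesis using w True by auto
    next
      case False thus ?thesis using w by auto
    qed
  qed
  show ?thesis
    unfolding d1_def[symmetric] \<delta>_def[symmetric]
    using part1 part2 assms(9) unfolding \<delta>_def by blast
qed

end
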